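(* Let $q\geq 0$ and $n\geq 0$. Carole can win (i.e. Paul has no winning strategy in) the $q$-round pathological liar game with $1$ lie and initial state $(n,0)$ provided $$2^q>\begin{cases} n(q+1) & \text{if $n$ is even},\\ n(q+1)-(q-1) & \text{if $n$ is odd}.\end{cases}$$
   Context: Pathological liar game with $1$ lie: a state is a pair $(x_0,x_1)$ of nonnegative integers. In each of $q$ rounds Paul chooses a legal question $(a_0,a_1)$ with integers $0\leq a_i\leq x_i$, and Carole answers Y or N; the new state is $(a_0,\,a_1+x_0-a_0)$ after Y, or $(x_0-a_0,\,x_1-a_1+a_0)$ after N. Paul wins iff after $q$ rounds $x_0+x_1\geq 1$; otherwise Carole wins. *)

theory Defs
  imports Main
begin

definition legal_question :: "nat \<times> nat \<Rightarrow> nat \<times> nat \<Rightarrow> bool" where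
  "legal_question x a \<longleftrightarrow> fst a \<le> fst x \<and> snd a \<le> snd x"

definition yes_state :: "nat \<times> nat \<Rightarrow> nat \<times> nat \<Rightarrow> nat \<times> nat" where
  "yes_state x a = (fst a, snd a + fst x - fst a)"

definition no_state :: "nat \<times> nat \<Rightarrow> nat \<times> nat \<Rightarrow> nat \<times> nat" where
  "no_state x a = (fst x - fst a, snd x - snd a + fst a)"

fun paul_wins :: "nat \<Rightarrow> nat \<times> nat \<Rightarrow> bool" where
  "paul_wins 0 x = (fst x + snd x \<ge> 1)"
| "paul_wins (Suc q) x = (\<exists>a. legal_question x a \<and>
      paul_wins q (yes_state x a) \<and> paul_wins q (no_state x a))"

end

theory Submission
  imports Defs
begin

definition wt :: "nat \<Rightarrow> nat \<times> nat \<Rightarrow> nat" where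
  "wt q x = fst x * (q + 1) + snd x"

lemma wt_split:
  assumes "legal_question x a"
  shows "wt q (yes_state x a) + wt q (no_state x a) = wt (Suc q) x"
proof -
  obtain x0 x1 a0 a1 where e: "x = (x0, x1)" "a = (a0, a1)" by (cases x, cases a) auto
  with assms have l: "a0 \<le> x0" "a1 \<le> x1" by (auto simp: legal_question_def)
  have "wt q (yes_state x a) = a0 * (q+1) + (a1 + x0 - a0)"
    using e by (simp add: wt_def yes_state_def)
  moreover have "wt q (no_state x a) = (x0 - a0) * (q+1) + (x1 - a1 + a0)"
    using e by (simp add: wt_def no_state_def)
  moreover have "a0 * (q+1) + (x0 - a0) * (q+1) = x0 * (q+1)"
    using l by (metis add_mult_distrib le_add_diff_inverse)
  ultimately show ?thesis using e l by (simp add: wt_def)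
qed

lemma carole_wins: "wt q x < 2 ^ q \<Longrightarrow> \<not> paul_wins q x"
proof (induction q arbitrary: x)
  case 0
  then show ?case by (simp add: wt_def)
next
  case (Suc q)
  show ?case
  proof
    assume "paul_wins (Suc q) x"
    then obtain a where a: "legal_question x a" "paul_wins q (yes_state x a)"
      "paul_wins q (no_state x a)" by auto
    have "wt q (yes_state x a) + wt q (no_state x a) < 2 * 2 ^ q"
      using wt_split[OF a(1), of q] Suc.prems by simp
    then have "wt q (yes_state x a) < 2 ^ q \<or> wt q (no_state x a) < 2 ^ q" by linarith
    then show False using Suc.IH a by blast
  qed
qed

theorem lemma11:
  fixes q n :: nat
  assumes "(if even n then 2 ^ q > int n * (int q + 1)
            else 2 ^ q > int n * (int q + 1) - (int q - 1))"
  shows "\<not> paul_wins q (n, 0)"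
proof (cases "even n")
  case True
  have e1: "int (n * (q+1)) = int n * (int q + 1)" by (simp add: algebra_simps)
  have e2: "int (2 ^ q) = 2 ^ q" by simp
  have "int (n * (q+1)) < int (2 ^ q)" using assms True unfolding e1 e2 by simp
  then have "n * (q+1) < 2 ^ q" by (simp only: of_nat_less_iff)
  then have "wt q (n, 0) < 2 ^ q" unfolding wt_def by simp
  then show ?thesis by (rule carole_wins)
next
  case False
  then obtain m where n: "n = 2*m+1" using oddE by blast
  show ?thesis
  proof (cases q)
    case 0
    then show ?thesis using assms False by simp
  next
    case (Suc p)
    have e2: "int (2 ^ Suc p) = 2 ^ Suc p" by simp
    have h: "int (2 ^ Suc p) > int n * (int p + 2) - int p" using assms False Suc unfolding e2
      by (simp add: algebra_simps)
    have key: "m * p + n < 2 ^ p"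
    proof -
      have "int n * (int p + 2) - int p = 2 * (int m * int p + int n)"
        using n by (simp add: algebra_simps)
      with h have "2 * (int m * int p + int n) < 2 * int (2 ^ p)" by simp
      then have "int (m * p + n) < int (2 ^ p)" by simp
      then show ?thesis by (simp only: of_nat_less_iff)
    qed
    show ?thesis
    proof
      assume "paul_wins q (n, 0)"
      then obtain a where a: "legal_question (n,0) a" "paul_wins p (yes_state (n,0) a)"
        "paul_wins p (no_state (n,0) a)" using Suc by auto
      obtain a0 a1 where ae: "a = (a0, a1)" by (cases a)
      with a(1) have l: "a0 \<le> n" "a1 = 0" by (auto simp: legal_question_def)
      have y: "wt p (yes_state (n,0) a) = a0 * p + n"
        using ae l by (simp add: wt_def yes_state_def algebra_simps)
      have nn: "wt p (no_state (n,0) a) = (n - a0) * p + n"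
      proof -
        obtain k where k: "n = a0 + k" using l(1) le_Suc_ex by blast
        show ?thesis using ae l unfolding k by (simp add: wt_def no_state_def algebra_simps)
      qed
      have "a0 \<le> m \<or> n - a0 \<le> m" using n l by linarith
      then show False
      proof
        assume "a0 \<le> m"
        then have "a0 * p \<le> m * p" by simp
        then have "wt p (yes_state (n,0) a) < 2 ^ p" using y key by linarith
        then show False using carole_wins a(2) by blast
      next
        assume "n - a0 \<le> m"
        then have "(n - a0) * p \<le> m * p" by simp
        then have "wt p (no_state (n,0) a) < 2 ^ p" using nn key by linarith
        then show False using carole_wins a(3) by blast
      qed
    qed
  qed
qed

end
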